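(* Every partial Steiner quadruple system of order $n$ has a cyclically $\ell$-good sequencing for each positive integer $\ell \leq 0.164\, n^{1/3}$.
   Context: A partial Steiner quadruple system of order $n$ is a pair $(X,\mathcal{B})$ where $X$ is an $n$-set of vertices ($n\ge 4$) and $\mathcal{B}$ is a collection of $4$-subsets of $X$ (blocks) such that each $3$-subset of $X$ is contained in at most one block. An independent set is a subset $Y\subseteq X$ containing no block. Let $\mathbb{Z}_n=\{0,\ldots,n-1\}$ be the cyclic group of order $n$. A sequencing is a bijection $\varphi:\mathbb{Z}_n\to X$. A set $S\subseteq X$ is cyclically consecutive if $S=\{\varphi(i),\varphi(i+1),\ldots,\varphi(i+|S|-1)\}$ for some $i\in\mathbb{Z}_n$ (addition in $\mathbb{Z}_n$). For a positive integer $\ell$, a sequencing is cyclically $\ell$-good if every set of $\ell$ cyclically consecutive vertices is an independent set. *)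

theory Defs
  imports Complex_Main
begin

definition partial_SQS :: "'a set \<Rightarrow> 'a set set \<Rightarrow> bool" where
  "partial_SQS X \<B> \<longleftrightarrow> finite X \<and> card X \<ge> 4 \<and>
     (\<forall>B\<in>\<B>. B \<subseteq> X \<and> card B = 4) \<and>
     (\<forall>T. T \<subseteq> X \<longrightarrow> card T = 3 \<longrightarrow> card {B\<in>\<B>. T \<subseteq> B} \<le> 1)"

definition independent :: "'a set set \<Rightarrow> 'a set \<Rightarrow> bool" where
  "independent \<B> Y \<longleftrightarrow> (\<forall>B\<in>\<B>. \<not> B \<subseteq> Y)"

text \<open>A sequencing is a bijection from Z_n, represented as {0..<n} with arithmetic mod n.\<close>
definition sequencing :: "'a set \<Rightarrow> (nat \<Rightarrow> 'a) \<Rightarrow> bool" where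
  "sequencing X \<phi> \<longleftrightarrow> bij_betw \<phi> {0..<card X} X"

definition cyc_consec :: "'a set \<Rightarrow> (nat \<Rightarrow> 'a) \<Rightarrow> 'a set \<Rightarrow> bool" where
  "cyc_consec X \<phi> S \<longleftrightarrow>
     (\<exists>i<card X. S = (\<lambda>j. \<phi> ((i + j) mod card X)) ` {0..<card S})"

definition cyclically_good :: "'a set \<Rightarrow> 'a set set \<Rightarrow> nat \<Rightarrow> (nat \<Rightarrow> 'a) \<Rightarrow> bool" where
  "cyclically_good X \<B> l \<phi> \<longleftrightarrow>
     (\<forall>S. S \<subseteq> X \<longrightarrow> card S = l \<longrightarrow> cyc_consec X \<phi> S \<longrightarrow> independent \<B> S)"

end

theory Submission
  imports Defs
begin

lemma lll:
  fixes Om :: "'b set" and E :: "'i \<Rightarrow> 'b set" and I :: "'i set"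
    and G :: "'i \<Rightarrow> 'i set" and p :: real and d :: nat
  assumes finO: "finite Om" and finI: "finite I" and ne: "Om \<noteq> {}"
    and deg: "\<And>a. a \<in> I \<Longrightarrow> card (G a \<inter> I) \<le> d"
    and neg: "\<And>a T. a \<in> I \<Longrightarrow> T \<subseteq> I \<Longrightarrow> T \<inter> G a = {} \<Longrightarrow>
       real (card (E a \<inter> (Om - \<Union>(E ` T)))) \<le> p * real (card (Om - \<Union>(E ` T)))"
    and p0: "0 \<le> p" and pd: "4 * p * d \<le> 1" and p1: "p \<le> 1/4"
  shows "Om - \<Union>(E ` I) \<noteq> {}"
proof -
  define Bs where "Bs T = Om - \<Union>(E ` T)" for T
  define x where "x = 2 * p"
  have x0: "0 \<le> x" and x1: "x \<le> 1/2" using p0 p1 by (auto simp: x_def)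
  have finB: "finite (Bs T)" for T using finO by (auto simp: Bs_def)
  define Q where "Q S \<longleftrightarrow> 0 < card (Bs S) \<and>
      (\<forall>a \<in> I - S. real (card (E a \<inter> Bs S)) \<le> x * real (card (Bs S)))" for S
  have step: "real (card (Bs (insert j T))) \<ge> (1 - x) * real (card (Bs T))"
    if "Q T" "j \<in> I - T" for j T
  proof -
    have eq: "Bs (insert j T) = Bs T - E j" by (auto simp: Bs_def)
    have "card (Bs T) = card (Bs T \<inter> E j) + card (Bs T - E j)"
      by (rule card_Int_Diff[OF finB])
    moreover have "real (card (E j \<inter> Bs T)) \<le> x * real (card (Bs T))"
      using that by (auto simp: Q_def)
    moreover have "Bs T \<inter> E j = E j \<inter> Bs T" by auto
    ultimately show ?thesis unfolding eq by (simp add: algebra_simps)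
  qed
  have main: "S \<subseteq> I \<longrightarrow> Q S" for S
  proof -
    have "finite S \<or> \<not> S \<subseteq> I" using finI finite_subset by blast
    then show ?thesis
    proof
      assume "finite S"
      then show ?thesis
      proof (induction S rule: finite_psubset_induct)
        case (psubset S)
        show ?case
        proof
          assume SI: "S \<subseteq> I"
          have IH: "Q T" if "T \<subset> S" for T using psubset.IH[OF that] that SI by blast
          have pos: "0 < card (Bs S)"
          proof (cases "S = {}")
            case True
            then have "Bs S = Om" by (simp add: Bs_def)
            then show ?thesis using ne finO by (simp add: card_gt_0_iff)
          next
            case False
            then obtain j where j: "j \<in> S" by blast
            have S: "S = insert j (S - {j})" using j by blast
            have QT: "Q (S - {j})" using IH j by blast
            have "real (card (Bs S)) \<ge> (1 - x) * real (card (Bs (S - {j})))"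
              using step[OF QT, of j] S j SI by auto
            moreover have "0 < card (Bs (S - {j}))" using QT by (simp add: Q_def)
            moreover have "0 < 1 - x" using x1 by simp
            ultimately have "0 < real (card (Bs S))"
              by (smt (verit) mult_pos_pos of_nat_0_less_iff)
            then show ?thesis by simp
          qed
          have bound: "real (card (E a \<inter> Bs S)) \<le> x * real (card (Bs S))" if a: "a \<in> I - S" for a
          proof -
            define S1 where "S1 = S \<inter> G a"
            define S2 where "S2 = S - G a"
            have finS1: "finite S1" using psubset.hyps by (simp add: S1_def)
            have grow: "U \<subseteq> S1 \<longrightarrow> real (card (Bs (S2 \<union> U))) \<ge> (1 - x) ^ card U * real (card (Bs S2))"
              if "finite U" for U
              using that
            proof (induction U rule: finite_induct)
              case empty
              then show ?case by simp
            next
              case (insert j U)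
              show ?case
              proof
                assume sub: "insert j U \<subseteq> S1"
                have "S2 \<union> U \<subset> S" using sub insert.hyps by (auto simp: S1_def S2_def)
                then have QT: "Q (S2 \<union> U)" by (rule IH)
                have jI: "j \<in> I - (S2 \<union> U)" using sub insert.hyps SI by (auto simp: S1_def S2_def)
                have "real (card (Bs (insert j (S2 \<union> U)))) \<ge> (1 - x) * real (card (Bs (S2 \<union> U)))"
                  by (rule step[OF QT jI])
                moreover have "real (card (Bs (S2 \<union> U))) \<ge> (1 - x) ^ card U * real (card (Bs S2))"
                  using insert.IH sub by blast
                moreover have "0 \<le> 1 - x" using x1 by simp
                ultimately have "real (card (Bs (insert j (S2 \<union> U)))) \<ge> (1 - x) * ((1 - x) ^ card U * real (card (Bs S2)))"
                  by (meson mult_left_mono order_trans)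
                moreover have "S2 \<union> insert j U = insert j (S2 \<union> U)" by blast
                ultimately show "real (card (Bs (S2 \<union> insert j U))) \<ge> (1 - x) ^ card (insert j U) * real (card (Bs S2))"
                  using insert.hyps by (simp add: mult.assoc)
              qed
            qed
            have g1: "real (card (Bs S)) \<ge> (1 - x) ^ card S1 * real (card (Bs S2))"
            proof -
              have "S2 \<union> S1 = S" by (auto simp: S1_def S2_def)
              then show ?thesis using grow[OF finS1] by simp
            qed
            have cS1: "card S1 \<le> d"
            proof -
              have "S1 \<subseteq> G a \<inter> I" using SI by (auto simp: S1_def)
              then have "card S1 \<le> card (G a \<inter> I)" using finI by (intro card_mono) auto
              then show ?thesis using deg[of a] a by simp
            qed
            have "(1 - x) ^ card S1 \<ge> (1 - x) ^ d"
              using x0 x1 cS1 by (intro power_decreasing) auto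
            moreover have "(1 - x) ^ d \<ge> 1 + real d * (- x)"
              using Bernoulli_inequality[of "-x" d] x1 by simp
            moreover have "real d * x \<le> 1/2" using pd by (simp add: x_def algebra_simps)
            ultimately have h: "(1 - x) ^ card S1 \<ge> 1/2" by linarith
            have g2: "real (card (Bs S)) \<ge> 1/2 * real (card (Bs S2))"
              by (rule order_trans[OF _ g1]) (rule mult_right_mono[OF h], simp)
            have "Bs S \<subseteq> Bs S2" by (auto simp: Bs_def S2_def)
            then have "card (E a \<inter> Bs S) \<le> card (E a \<inter> Bs S2)"
              using finB by (intro card_mono) auto
            moreover have "real (card (E a \<inter> Bs S2)) \<le> p * real (card (Bs S2))"
            proof -
              have "S2 \<subseteq> I" "S2 \<inter> G a = {}" using SI by (auto simp: S2_def)
              then show ?thesis using neg[of a S2] a by (simp add: Bs_def)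
            qed
            ultimately have "real (card (E a \<inter> Bs S)) \<le> p * real (card (Bs S2))" by linarith
            also have "\<dots> \<le> p * (2 * real (card (Bs S)))"
              using g2 p0 by (intro mult_left_mono) auto
            finally show ?thesis by (simp add: x_def)
          qed
          show "Q S" using pos bound by (simp add: Q_def)
        qed
      qed
    qed simp
  qed
  have "Q I" using main by blast
  then have "0 < card (Bs I)" by (simp add: Q_def)
  then show ?thesis unfolding Bs_def by (metis card.empty less_irrefl)
qed

definition Omg :: "'a set \<Rightarrow> (nat \<Rightarrow> 'a) set" where
  "Omg X = {\<phi>. bij_betw \<phi> {0..<card X} X \<and> (\<forall>i. card X \<le> i \<longrightarrow> \<phi> i = undefined)}"

definition Ev :: "'a set \<Rightarrow> nat list \<Rightarrow> 'a list \<Rightarrow> (nat \<Rightarrow> 'a) set" where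
  "Ev X ps xs = {\<phi> \<in> Omg X. \<forall>t<length ps. \<phi> (ps!t) = xs!t}"

definition nc :: "nat list \<Rightarrow> 'a list \<Rightarrow> nat list \<Rightarrow> 'a list \<Rightarrow> bool" where
  "nc ps xs ps' xs' \<longleftrightarrow> (\<forall>t<length ps. \<forall>t'<length ps'. (ps!t = ps'!t') = (xs!t = xs'!t'))"

lemma finite_Omg: "finite X \<Longrightarrow> finite (Omg X)"
proof -
  assume "finite X"
  let ?f = "\<lambda>\<phi>::nat \<Rightarrow> 'a. map \<phi> [0..<card X]"
  have "?f ` Omg X \<subseteq> {xs. set xs \<subseteq> X \<and> length xs = card X}"
    by (auto simp: Omg_def bij_betw_def)
  then have "finite (?f ` Omg X)" using finite_lists_length_eq[OF \<open>finite X\<close>] finite_subset by blast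
  moreover have "inj_on ?f (Omg X)"
  proof (rule inj_onI)
    fix a b assume ab: "a \<in> Omg X" "b \<in> Omg X" "?f a = ?f b"
    show "a = b"
    proof
      fix i show "a i = b i"
      proof (cases "i < card X")
        case True
        have "\<forall>x\<in>{0..<card X}. a x = b x" using ab(3) by simp
        then show ?thesis using True by simp
      next
        case False
        then show ?thesis using ab(1,2) by (simp add: Omg_def)
      qed
    qed
  qed
  ultimately show ?thesis by (rule finite_imageD)
qed

lemma Omg_ne: "finite X \<Longrightarrow> Omg X \<noteq> {}"
proof -
  assume "finite X"
  then obtain h where h: "bij_betw h {0..<card X} X" using ex_bij_betw_nat_finite by blast
  define g where "g i = (if i < card X then h i else undefined)" for i
  have "bij_betw g {0..<card X} X" using h by (subst bij_betw_cong[of _ g h]) (auto simp: g_def)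
  then have "g \<in> Omg X" by (auto simp: Omg_def g_def)
  then show ?thesis by blast
qed

lemma swap_le:
  fixes X :: "'a set" and F :: "'i \<Rightarrow> nat list \<times> 'a list"
  assumes finX: "finite X" and len: "length xs = length ps" "length ys = length ps"
    and dxs: "distinct xs" and dys: "distinct ys" and sxs: "set xs \<subseteq> X" and sys: "set ys \<subseteq> X"
    and sps: "set ps \<subseteq> {0..<card X}"
    and ncT: "\<And>b. b \<in> T \<Longrightarrow> nc ps xs (fst (F b)) (snd (F b))"
  shows "card (Ev X ps xs \<inter> (Omg X - (\<Union>b\<in>T. Ev X (fst (F b)) (snd (F b)))))
       \<le> card (Ev X ps ys \<inter> (Omg X - (\<Union>b\<in>T. Ev X (fst (F b)) (snd (F b)))))"
proof -
  define n where "n = card X"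
  define k where "k = length ps"
  define Xs where "Xs = set xs"
  define Ys where "Ys = set ys"
  have cX: "card Xs = k" "card Ys = k" using dxs dys len by (auto simp: Xs_def Ys_def k_def distinct_card)
  have "card (Ys - Xs) = card (Xs - Ys)"
  proof -
    have "card (Ys - Xs) = card Ys - card (Ys \<inter> Xs)" by (simp add: card_Diff_subset_Int Ys_def)
    moreover have "card (Xs - Ys) = card Xs - card (Xs \<inter> Ys)" by (simp add: card_Diff_subset_Int Xs_def)
    ultimately show ?thesis using cX by (simp add: Int_commute)
  qed
  then obtain h where h: "bij_betw h (Ys - Xs) (Xs - Ys)"
    using finite_same_card_bij[of "Ys - Xs" "Xs - Ys"] by (auto simp: Xs_def Ys_def)
  define idx where "idx z = (THE t. t < k \<and> xs!t = z)" for z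
  have idx: "idx z < k \<and> xs!(idx z) = z" if "z \<in> Xs" for z
  proof -
    have "\<exists>!t. t < length xs \<and> xs!t = z" using distinct_Ex1[OF dxs] that by (simp add: Xs_def)
    then show ?thesis unfolding idx_def using len(1) by (simp add: k_def) (rule theI', simp)
  qed
  have idx2: "idx (xs!t) = t" if "t < k" for t
  proof -
    have "idx (xs!t) < k \<and> xs!(idx (xs!t)) = xs!t" using idx[of "xs!t"] that len
      by (simp add: Xs_def k_def)
    then show ?thesis using nth_eq_iff_index_eq[OF dxs] that len by (auto simp: k_def)
  qed
  define \<rho> where "\<rho> z = (if z \<in> Xs then ys!(idx z) else if z \<in> Ys then h z else z)" for z
  have \<rho>X: "\<rho> z \<in> X" if "z \<in> X" for z
  proof -
    have "ys!(idx z) \<in> X" if "z \<in> Xs" using idx[OF that] len sys by (auto simp: k_def)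
    moreover have "h z \<in> X" if "z \<in> Ys" "z \<notin> Xs" using h that sxs
      by (auto simp: bij_betw_def Xs_def)
    ultimately show ?thesis using that by (auto simp: \<rho>_def)
  qed
  have \<rho>inj: "inj_on \<rho> X"
  proof (rule inj_onI)
    fix z1 z2 assume z: "z1 \<in> X" "z2 \<in> X" "\<rho> z1 = \<rho> z2"
    have hX: "h z \<in> Xs - Ys" if "z \<in> Ys - Xs" for z using h that by (auto simp: bij_betw_def)
    have yY: "ys!(idx z) \<in> Ys" if "z \<in> Xs" for z using idx[OF that] len by (auto simp: Ys_def k_def)
    show "z1 = z2"
    proof (cases "z1 \<in> Xs")
      case True
      note t1 = this
      show ?thesis
      proof (cases "z2 \<in> Xs")
        case True
        then have "ys!(idx z1) = ys!(idx z2)" using z t1 by (simp add: \<rho>_def)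
        then have "idx z1 = idx z2" using nth_eq_iff_index_eq[OF dys] idx t1 True len by (auto simp: k_def)
        then show ?thesis using idx t1 True by metis
      next
        case False
        then show ?thesis using z t1 hX[of z2] yY[of z1] by (auto simp: \<rho>_def split: if_splits)
      qed
    next
      case False
      note f1 = this
      show ?thesis
      proof (cases "z2 \<in> Xs")
        case True
        then show ?thesis using z f1 hX[of z1] yY[of z2] by (auto simp: \<rho>_def split: if_splits)
      next
        case False
        note f2 = this
        have hinj: "inj_on h (Ys - Xs)" using h by (simp add: bij_betw_def)
        show ?thesis
        proof (cases "z1 \<in> Ys"; cases "z2 \<in> Ys")
          assume "z1 \<in> Ys" "z2 \<in> Ys"
          then have "h z1 = h z2" using z f1 f2 by (simp add: \<rho>_def)
          then show ?thesis using hinj \<open>z1 \<in> Ys\<close> \<open>z2 \<in> Ys\<close> f1 f2 by (simp add: inj_on_def)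
        next
          assume "z1 \<in> Ys" "z2 \<notin> Ys"
          then have "h z1 = z2" using z f1 f2 by (simp add: \<rho>_def)
          then show ?thesis using hX[of z1] \<open>z1 \<in> Ys\<close> f1 f2 by simp
        next
          assume "z1 \<notin> Ys" "z2 \<in> Ys"
          then have "z1 = h z2" using z f1 f2 by (simp add: \<rho>_def)
          then show ?thesis using hX[of z2] \<open>z2 \<in> Ys\<close> f1 f2 by simp
        next
          assume "z1 \<notin> Ys" "z2 \<notin> Ys"
          then show ?thesis using z f1 f2 by (simp add: \<rho>_def)
        qed
      qed
    qed
  qed
  have \<rho>bij: "bij_betw \<rho> X X"
    using endo_inj_surj[OF finX _ \<rho>inj] \<rho>X \<rho>inj by (auto simp: bij_betw_def)
  define g where "g \<phi> = (\<lambda>i. if i < n then \<rho> (\<phi> i) else undefined)" for \<phi> :: "nat \<Rightarrow> 'a"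
  let ?B = "Omg X - (\<Union>b\<in>T. Ev X (fst (F b)) (snd (F b)))"
  have gO: "g \<phi> \<in> Omg X" if "\<phi> \<in> Omg X" for \<phi>
  proof -
    have b: "bij_betw \<phi> {0..<n} X" using that by (simp add: Omg_def n_def)
    have "bij_betw (\<rho> \<circ> \<phi>) {0..<n} X" using bij_betw_trans[OF b \<rho>bij] .
    then have "bij_betw (g \<phi>) {0..<n} X" by (subst bij_betw_cong[of _ _ "\<rho> \<circ> \<phi>"]) (auto simp: g_def)
    then show ?thesis by (auto simp: Omg_def g_def n_def)
  qed
  have key: "\<phi> \<in> Ev X ps' xs'" if "\<phi> \<in> Ev X ps xs" "g \<phi> \<in> Ev X ps' xs'" "nc ps xs ps' xs'"
    for \<phi> ps' xs'
  proof -
    have \<phi>O: "\<phi> \<in> Omg X" using that by (simp add: Ev_def)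
    have bij: "bij_betw \<phi> {0..<n} X" and und: "\<And>i. n \<le> i \<Longrightarrow> \<phi> i = undefined"
      using \<phi>O by (auto simp: Omg_def n_def)
    have ev: "\<phi> (ps!t) = xs!t" if "t < k" for t using \<open>\<phi> \<in> Ev X ps xs\<close> that by (simp add: Ev_def k_def)
    have psn: "ps!t < n" if "t < k" for t using subsetD[OF sps nth_mem[of t ps]] that by (simp add: n_def k_def)
    have "\<phi> (ps'!t') = xs'!t'" if t': "t' < length ps'" for t'
    proof -
      define i where "i = ps'!t'"
      have gi: "g \<phi> i = xs'!t'" using \<open>g \<phi> \<in> Ev X ps' xs'\<close> t' by (simp add: Ev_def i_def)
      show ?thesis
      proof (cases "i < n")
        case False
        then show ?thesis using gi und[of i] by (simp add: g_def i_def)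
      next
        case True
        define z where "z = \<phi> i"
        have zX: "z \<in> X" using bij True by (auto simp: bij_betw_def z_def)
        have \<rho>z: "\<rho> z = xs'!t'" using gi True by (simp add: g_def z_def)
        show ?thesis
        proof (cases "z \<in> Xs")
          case True
          define t where "t = idx z"
          have t: "t < k" "xs!t = z" using idx[OF True] by (auto simp: t_def)
          have "\<phi> (ps!t) = \<phi> i" using ev[OF t(1)] t by (simp add: z_def)
          then have "ps!t = i" using bij psn[OF t(1)] \<open>i < n\<close> by (auto simp: bij_betw_def inj_on_def)
          then have "xs!t = xs'!t'" using \<open>nc ps xs ps' xs'\<close> t t' by (auto simp: nc_def k_def i_def)
          then show ?thesis using t by (simp add: z_def i_def)
        next
          case False
          note nX = this
          show ?thesis
          proof (cases "z \<in> Ys")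
            case True
            have hz: "h z \<in> Xs - Ys" using h True nX by (auto simp: bij_betw_def)
            define s where "s = idx (h z)"
            have s: "s < k" "xs!s = h z" using idx[of "h z"] hz by (auto simp: s_def)
            have "xs'!t' = h z" using \<rho>z True nX by (simp add: \<rho>_def)
            then have "ps!s = ps'!t'" using \<open>nc ps xs ps' xs'\<close> s t' by (auto simp: nc_def k_def)
            then have "z = xs!s" using ev[OF s(1)] by (simp add: z_def i_def)
            then have False using nX s len by (auto simp: Xs_def k_def)
            then show ?thesis ..
          next
            case False
            then show ?thesis using \<rho>z nX by (simp add: \<rho>_def z_def i_def)
          qed
        qed
      qed
    qed
    then show ?thesis using \<phi>O by (simp add: Ev_def)
  qed
  have maps: "g ` (Ev X ps xs \<inter> ?B) \<subseteq> Ev X ps ys \<inter> ?B"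
  proof
    fix \<psi> assume "\<psi> \<in> g ` (Ev X ps xs \<inter> ?B)"
    then obtain \<phi> where \<phi>: "\<phi> \<in> Ev X ps xs" "\<phi> \<in> ?B" and \<psi>: "\<psi> = g \<phi>" by blast
    have \<phi>O: "\<phi> \<in> Omg X" using \<phi> by (simp add: Ev_def)
    have "\<psi> (ps!t) = ys!t" if "t < length ps" for t
    proof -
      have "ps!t < n" using subsetD[OF sps nth_mem[of t ps]] that by (simp add: n_def)
      moreover have "\<phi> (ps!t) = xs!t" using \<phi>(1) that by (simp add: Ev_def)
      moreover have "xs!t \<in> Xs" using that len by (simp add: Xs_def)
      ultimately show ?thesis using idx2[of t] that by (simp add: \<psi> g_def \<rho>_def k_def)
    qed
    then have "\<psi> \<in> Ev X ps ys" using gO[OF \<phi>O] \<psi> by (simp add: Ev_def)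
    moreover have "\<psi> \<notin> Ev X (fst (F b)) (snd (F b))" if "b \<in> T" for b
      using key[of \<phi> "fst (F b)" "snd (F b)"] \<phi> ncT[OF that] \<psi> that by blast
    ultimately show "\<psi> \<in> Ev X ps ys \<inter> ?B" using gO[OF \<phi>O] \<psi> by blast
  qed
  have inj: "inj_on g (Ev X ps xs \<inter> ?B)"
  proof (rule inj_onI)
    fix \<phi>1 \<phi>2 assume a: "\<phi>1 \<in> Ev X ps xs \<inter> ?B" "\<phi>2 \<in> Ev X ps xs \<inter> ?B" "g \<phi>1 = g \<phi>2"
    have O: "\<phi>1 \<in> Omg X" "\<phi>2 \<in> Omg X" using a by (auto simp: Ev_def)
    show "\<phi>1 = \<phi>2"
    proof
      fix i
      show "\<phi>1 i = \<phi>2 i"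
      proof (cases "i < n")
        case True
        have "\<phi>1 i \<in> X" "\<phi>2 i \<in> X" using O True by (auto simp: Omg_def bij_betw_def n_def)
        moreover have "\<rho> (\<phi>1 i) = \<rho> (\<phi>2 i)" using fun_cong[OF a(3), of i] True by (simp add: g_def)
        ultimately show ?thesis using \<rho>inj by (auto simp: inj_on_def)
      next
        case False
        then show ?thesis using O by (simp add: Omg_def n_def)
      qed
    qed
  qed
  show ?thesis
    by (rule card_inj_on_le[OF inj maps]) (use finite_Omg[OF finX] in \<open>auto simp: Ev_def\<close>)
qed

lemma neg_bound:
  fixes X :: "'a set" and F :: "'i \<Rightarrow> nat list \<times> 'a list"
  assumes finX: "finite X" and len: "length xs = length ps"
    and dxs: "distinct xs" and sxs: "set xs \<subseteq> X"
    and sps: "set ps \<subseteq> {0..<card X}"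
    and ncT: "\<And>b. b \<in> T \<Longrightarrow> nc ps xs (fst (F b)) (snd (F b))"
  shows "card {ys. length ys = length ps \<and> distinct ys \<and> set ys \<subseteq> X}
           * card (Ev X ps xs \<inter> (Omg X - (\<Union>b\<in>T. Ev X (fst (F b)) (snd (F b)))))
       \<le> card (Omg X - (\<Union>b\<in>T. Ev X (fst (F b)) (snd (F b))))"
proof -
  define B where "B = Omg X - (\<Union>b\<in>T. Ev X (fst (F b)) (snd (F b)))"
  define D where "D = {ys. length ys = length ps \<and> distinct ys \<and> set ys \<subseteq> X}"
  have finD: "finite D" unfolding D_def
    by (rule finite_subset[OF _ finite_lists_length_eq[OF finX, of "length ps"]]) auto
  have finB: "finite B" using finite_Omg[OF finX] by (simp add: B_def)
  have disj: "\<forall>i\<in>D. \<forall>j\<in>D. i \<noteq> j \<longrightarrow> (Ev X ps i \<inter> B) \<inter> (Ev X ps j \<inter> B) = {}"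
  proof (intro ballI impI)
    fix ys1 ys2 assume a: "ys1 \<in> D" "ys2 \<in> D" "ys1 \<noteq> ys2"
    show "(Ev X ps ys1 \<inter> B) \<inter> (Ev X ps ys2 \<inter> B) = {}"
    proof (rule ccontr)
      assume "(Ev X ps ys1 \<inter> B) \<inter> (Ev X ps ys2 \<inter> B) \<noteq> {}"
      then obtain \<phi> where "\<phi> \<in> Ev X ps ys1" "\<phi> \<in> Ev X ps ys2" by blast
      then have "ys1!t = ys2!t" if "t < length ps" for t using that by (auto simp: Ev_def)
      then have "ys1 = ys2" using a by (intro nth_equalityI) (auto simp: D_def)
      then show False using a by simp
    qed
  qed
  have "(\<Sum>ys\<in>D. card (Ev X ps ys \<inter> B)) = card (\<Union>ys\<in>D. Ev X ps ys \<inter> B)"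
    by (rule card_UN_disjoint[symmetric]) (use finD finB disj in auto)
  also have "\<dots> \<le> card B" using finB by (intro card_mono) auto
  finally have s: "(\<Sum>ys\<in>D. card (Ev X ps ys \<inter> B)) \<le> card B" .
  have "card D * card (Ev X ps xs \<inter> B) \<le> (\<Sum>ys\<in>D. card (Ev X ps ys \<inter> B))"
  proof -
    have "card (Ev X ps xs \<inter> B) \<le> card (Ev X ps ys \<inter> B)" if "ys \<in> D" for ys
      using swap_le[OF finX len _ dxs _ sxs _ sps ncT, of ys] that by (auto simp: D_def B_def)
    then show ?thesis using sum_bounded_below[of D "card (Ev X ps xs \<inter> B)"] by simp
  qed
  then show ?thesis using s by (simp add: B_def D_def)
qed

lemma modcanc: "(w1 + c) mod (n::nat) = (w2 + c) mod n \<Longrightarrow> w1 < n \<Longrightarrow> w2 < n \<Longrightarrow> w1 = w2"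
proof -
  assume a: "(w1 + c) mod n = (w2 + c) mod n" "w1 < n" "w2 < n"
  show ?thesis
  proof (cases "w1 \<le> w2")
    case True
    then have "n dvd (w2 + c) - (w1 + c)" using a mod_eq_dvd_iff_nat[of "w1 + c" "w2 + c" n] by simp
    then have "n dvd w2 - w1" by simp
    then show ?thesis using True a by (metis diff_less_mono2 dvd_imp_le le_antisym less_imp_diff_less not_le diff_is_0_eq' dvd_0_right zero_less_diff)
  next
    case False
    then have "n dvd (w1 + c) - (w2 + c)" using a mod_eq_dvd_iff_nat[of "w2 + c" "w1 + c" n] by simp
    then have "n dvd w1 - w2" by simp
    then show ?thesis using False a by (metis dvd_imp_le less_imp_diff_less not_le zero_less_diff)
  qed
qed

definition XS :: "'a set set \<Rightarrow> 'a list set" where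
  "XS \<B> = {xs. length xs = 4 \<and> distinct xs \<and> set xs \<in> \<B>}"

lemma XS_uniq:
  assumes S: "partial_SQS X \<B>" and xs: "xs \<in> XS \<B>" and ys: "ys \<in> XS \<B>"
    and ijk: "i < 4" "j < 4" "k < 4" "i \<noteq> j" "i \<noteq> k" "j \<noteq> k"
    and eq: "xs!i = ys!i" "xs!j = ys!j" "xs!k = ys!k"
  shows "xs = ys"
proof -
  have finX: "finite X" and Bs: "\<And>B. B \<in> \<B> \<Longrightarrow> B \<subseteq> X \<and> card B = 4"
    and tr: "\<And>T. T \<subseteq> X \<Longrightarrow> card T = 3 \<Longrightarrow> card {B\<in>\<B>. T \<subseteq> B} \<le> 1"
    using S by (auto simp: partial_SQS_def)
  have lx: "length xs = 4" "distinct xs" "set xs \<in> \<B>" and ly: "length ys = 4" "distinct ys" "set ys \<in> \<B>"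
    using xs ys by (auto simp: XS_def)
  define T where "T = {xs!i, xs!j, xs!k}"
  have cT: "card T = 3" using ijk lx nth_eq_iff_index_eq[OF lx(2)] by (auto simp: T_def)
  have Txs: "T \<subseteq> set xs" using ijk lx by (auto simp: T_def)
  have Tys: "T \<subseteq> set ys" using ijk ly eq by (auto simp: T_def)
  have TX: "T \<subseteq> X" using Txs Bs[OF lx(3)] by auto
  have finB: "finite \<B>" using finX Bs by (metis (no_types, lifting) Pow_iff finite_Pow_iff finite_subset subsetI)
  have "card {B\<in>\<B>. T \<subseteq> B} \<le> Suc 0" using tr[OF TX cT] by simp
  then have same: "set xs = set ys"
    using card_le_Suc0_iff_eq[of "{B\<in>\<B>. T \<subseteq> B}"] finB lx(3) ly(3) Txs Tys by auto
  have cD: "card (set xs - T) = 1"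
    using card_Diff_subset[OF finite_subset[OF Txs] Txs] cT lx distinct_card[OF lx(2)] by simp
  show ?thesis
  proof (rule nth_equalityI)
    show "length xs = length ys" using lx ly by simp
    fix m assume m: "m < length xs"
    show "xs!m = ys!m"
    proof (cases "m = i \<or> m = j \<or> m = k")
      case True
      then show ?thesis using eq by auto
    next
      case False
      have a: "xs!m \<in> set xs - T" using m False ijk lx nth_eq_iff_index_eq[OF lx(2)] by (auto simp: T_def)
      have b: "ys!m \<in> set xs - T"
        using m False ijk ly lx eq same nth_eq_iff_index_eq[OF ly(2)] by (auto simp: T_def)
      show ?thesis using a b cD card_1_singletonE by (metis singletonD)
    qed
  qed
qed

lemma prod3: "3 \<le> a \<Longrightarrow> \<Prod>{a - 3 + 1..(a::nat)} = a * (a - 1) * (a - 2)"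
proof -
  assume "3 \<le> a"
  then obtain m where m: "a = 3 + m" using le_Suc_ex by blast
  have "{a - 3 + 1..a} = {m+1, m+2, m+3}" using m by auto
  then show ?thesis using m by (simp add: algebra_simps)
qed
lemma prod4: "4 \<le> a \<Longrightarrow> \<Prod>{a - 4 + 1..(a::nat)} = a * (a - 1) * (a - 2) * (a - 3)"
proof -
  assume "4 \<le> a"
  then obtain m where m: "a = 4 + m" using le_Suc_ex by blast
  have "{a - 4 + 1..a} = {m+1, m+2, m+3, m+4}" using m by auto
  then show ?thesis using m by (simp add: algebra_simps)
qed
lemma prod2: "2 \<le> a \<Longrightarrow> \<Prod>{a - 2 + 1..(a::nat)} = a * (a - 1)"
proof -
  assume "2 \<le> a"
  then obtain m where m: "a = 2 + m" using le_Suc_ex by blast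
  have "{a - 2 + 1..a} = {m+1, m+2}" using m by auto
  then show ?thesis using m by (simp add: algebra_simps)
qed

lemma card_XS:
  assumes S: "partial_SQS X \<B>"
  shows "card (XS \<B>) \<le> card X * (card X - 1) * (card X - 2)"
proof -
  have finX: "finite X" and n4: "4 \<le> card X" and Bs: "\<And>B. B \<in> \<B> \<Longrightarrow> B \<subseteq> X"
    using S by (auto simp: partial_SQS_def)
  have inj: "inj_on (take 3) (XS \<B>)"
  proof (rule inj_onI)
    fix xs ys assume a: "xs \<in> XS \<B>" "ys \<in> XS \<B>" "take 3 xs = take 3 ys"
    have "take 3 xs ! t = take 3 ys ! t" for t using a(3) by simp
    then have "xs!0 = ys!0" "xs!1 = ys!1" "xs!2 = ys!2"
      by (metis nth_take zero_less_numeral one_less_numeral_iff semiring_norm(76) less_numeral_extra(1)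
           numeral_less_iff lessI eval_nat_numeral(3) less_Suc_eq)+
    then show "xs = ys" using XS_uniq[OF S a(1) a(2), of 0 1 2] by simp
  qed
  have img: "take 3 ` XS \<B> \<subseteq> {ys. length ys = 3 \<and> distinct ys \<and> set ys \<subseteq> X}"
    using Bs by (auto simp: XS_def dest: in_set_takeD)
  have "card (XS \<B>) \<le> card {ys. length ys = 3 \<and> distinct ys \<and> set ys \<subseteq> X}"
    by (rule card_inj_on_le[OF inj img])
       (rule finite_subset[OF _ finite_lists_length_eq[OF finX, of 3]], auto)
  also have "\<dots> = card X * (card X - 1) * (card X - 2)"
    using card_lists_distinct_length_eq[OF finX, of 3] n4 prod3[of "card X"] by simp
  finally show ?thesis .
qed

lemma card_XSt:
  assumes S: "partial_SQS X \<B>" and tij: "t < 4" "i < 4" "j < 4" "t \<noteq> i" "t \<noteq> j" "i \<noteq> j"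
  shows "card {xs \<in> XS \<B>. xs!t = x} \<le> (card X - 1) * (card X - 2)"
proof (cases "x \<in> X")
  case False
  have finX: "finite X" and Bs: "\<And>B. B \<in> \<B> \<Longrightarrow> B \<subseteq> X"
    using S by (auto simp: partial_SQS_def)
  have "{xs \<in> XS \<B>. xs!t = x} = {}" using False Bs tij by (force simp: XS_def)
  then show ?thesis by (metis card.empty zero_le)
next
  case True
  have finX: "finite X" and n4: "4 \<le> card X" and Bs: "\<And>B. B \<in> \<B> \<Longrightarrow> B \<subseteq> X"
    using S by (auto simp: partial_SQS_def)
  let ?A = "{xs \<in> XS \<B>. xs!t = x}"
  have inj: "inj_on (\<lambda>xs. [xs!i, xs!j]) ?A"
  proof (rule inj_onI)
    fix xs ys assume a: "xs \<in> ?A" "ys \<in> ?A" "[xs!i, xs!j] = [ys!i, ys!j]"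
    then show "xs = ys" using XS_uniq[OF S, of xs ys t i j] tij by auto
  qed
  have img: "(\<lambda>xs. [xs!i, xs!j]) ` ?A \<subseteq> {ys. length ys = 2 \<and> distinct ys \<and> set ys \<subseteq> X - {x}}"
  proof
    fix zs assume "zs \<in> (\<lambda>xs. [xs!i, xs!j]) ` ?A"
    then obtain xs where xs: "xs \<in> XS \<B>" "xs!t = x" "zs = [xs!i, xs!j]" by blast
    have l: "length xs = 4" "distinct xs" "set xs \<subseteq> X" using xs Bs by (auto simp: XS_def)
    have "xs!i \<noteq> xs!j" "xs!i \<noteq> x" "xs!j \<noteq> x"
      using nth_eq_iff_index_eq[OF l(2)] tij l(1) xs(2) by auto
    moreover have "xs!i \<in> X" "xs!j \<in> X" using l tij nth_mem by (metis subsetD)+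
    ultimately show "zs \<in> {ys. length ys = 2 \<and> distinct ys \<and> set ys \<subseteq> X - {x}}" using xs(3) by auto
  qed
  have cXx: "card (X - {x}) = card X - 1" using True finX by simp
  have "card ?A \<le> card {ys. length ys = 2 \<and> distinct ys \<and> set ys \<subseteq> X - {x}}"
    by (rule card_inj_on_le[OF inj img])
       (rule finite_subset[OF _ finite_lists_length_eq[of "X - {x}" 2]], use finX in auto)
  also have "\<dots> = (card X - 1) * (card X - 1 - 1)"
    using card_lists_distinct_length_eq[of "X - {x}" 2] finX n4 prod2[of "card X - 1"] cXx by simp
  also have "card X - 1 - 1 = card X - 2" by simp
  finally show ?thesis by simp
qed

lemma card_XSx:
  assumes S: "partial_SQS X \<B>"
  shows "card {xs \<in> XS \<B>. x \<in> set xs} \<le> 4 * ((card X - 1) * (card X - 2))"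
proof -
  have eq: "{xs \<in> XS \<B>. x \<in> set xs} = (\<Union>t\<in>{0..<4}. {xs \<in> XS \<B>. xs!t = x})"
    by (auto simp: XS_def in_set_conv_nth)
  have "card {xs \<in> XS \<B>. x \<in> set xs} \<le> (\<Sum>t\<in>{0..<4::nat}. card {xs \<in> XS \<B>. xs!t = x})"
    unfolding eq by (rule card_UN_le) simp
  also have "\<dots> \<le> (\<Sum>t\<in>{0..<4::nat}. (card X - 1) * (card X - 2))"
  proof (rule sum_mono)
    fix t :: nat assume "t \<in> {0..<4}"
    then have "t = 0 \<or> t = 1 \<or> t = 2 \<or> t = 3" by auto
    then show "card {xs \<in> XS \<B>. xs!t = x} \<le> (card X - 1) * (card X - 2)"
      using card_XSt[OF S, of 0 1 2 x] card_XSt[OF S, of 1 0 2 x] card_XSt[OF S, of 2 0 1 x]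
        card_XSt[OF S, of 3 0 1 x] by auto
  qed
  finally show ?thesis by simp
qed

definition OS :: "nat \<Rightarrow> nat list set" where
  "OS l = {os. length os = 4 \<and> os!0 = 0 \<and> set os \<subseteq> {0..<l}}"

lemma card_OS: "card (OS l) \<le> l ^ 3"
proof -
  have "OS l \<subseteq> (\<lambda>ys. 0 # ys) ` {ys. set ys \<subseteq> {0..<l} \<and> length ys = 3}"
  proof
    fix os assume "os \<in> OS l"
    then have o: "length os = 4" "os!0 = 0" "set os \<subseteq> {0..<l}" by (auto simp: OS_def)
    then obtain a ys where "os = a # ys" by (cases os) auto
    then show "os \<in> (\<lambda>ys. 0 # ys) ` {ys. set ys \<subseteq> {0..<l} \<and> length ys = 3}" using o by auto
  qed
  then have "card (OS l) \<le> card ((\<lambda>ys. 0 # ys) ` {ys. set ys \<subseteq> {0..<l} \<and> length ys = 3})"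
    by (intro card_mono finite_imageI finite_lists_length_eq) auto
  also have "\<dots> \<le> card {ys. set ys \<subseteq> {0..<l::nat} \<and> length ys = 3}" by (rule card_image_le) (rule finite_lists_length_eq, simp)
  also have "\<dots> = l ^ 3" using card_lists_length_eq[of "{0..<l::nat}" 3] by simp
  finally show ?thesis .
qed

definition pos :: "nat \<Rightarrow> nat \<Rightarrow> nat list \<Rightarrow> nat list" where
  "pos n w os = map (\<lambda>q. (w + q) mod n) os"

lemma finite_OS: "finite (OS l)"
proof -
  have "OS l \<subseteq> {os. set os \<subseteq> {0..<l} \<and> length os = 4}" by (auto simp: OS_def)
  then show ?thesis using finite_lists_length_eq[of "{0..<l}" 4] finite_subset by auto
qed

lemma finite_XS: "partial_SQS X \<B> \<Longrightarrow> finite (XS \<B>)"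
proof -
  assume S: "partial_SQS X \<B>"
  then have "finite X" "\<And>B. B \<in> \<B> \<Longrightarrow> B \<subseteq> X" by (auto simp: partial_SQS_def)
  then have "XS \<B> \<subseteq> {xs. set xs \<subseteq> X \<and> length xs = 4}" by (auto simp: XS_def)
  then show ?thesis using finite_lists_length_eq[OF \<open>finite X\<close>, of 4] finite_subset by auto
qed

lemma numeric:
  fixes l n :: nat
  assumes "real l \<le> 0.164 * root 3 (real n)" and "4 \<le> l"
  shows "128 * l ^ 3 + 3 \<le> n" and "l \<le> n"
proof -
  have r0: "0 \<le> root 3 (real n)" by simp
  have "real l ^ 3 \<le> (0.164 * root 3 (real n)) ^ 3"
    using assms(1) by (intro power_mono) auto
  also have "\<dots> = 0.164 ^ 3 * real n"
  proof -
    have rr: "root 3 (real n) ^ 3 = real n" by simp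
    show ?thesis unfolding power_mult_distrib rr ..
  qed
  finally have c0: "real l ^ 3 \<le> 0.164 ^ 3 * real n" .
  have e: "(0.164::real) ^ 3 = (4410944 / 1000000000)" by (simp add: power3_eq_cube)
  have c: "real l ^ 3 \<le> (4410944 / 1000000000) * real n" using c0 unfolding e .
  have "real l ^ 3 \<ge> 4 ^ 3" using assms(2) by (intro power_mono) auto
  then have "real l ^ 3 \<ge> 64" by simp
  then have "real n \<ge> 14509" using c by linarith
  then have "128 * real l ^ 3 + 3 \<le> real n" using c by linarith
  then have "real (128 * l ^ 3 + 3) \<le> real n" by simp
  then show n128: "128 * l ^ 3 + 3 \<le> n" by (simp only: of_nat_le_iff)
  have "l \<le> l ^ 3" using assms(2) by (simp add: self_le_power)
  then show "l \<le> n" using n128 by linarith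
qed

lemma pos_nth: "t < length os \<Longrightarrow> pos n w os ! t = (w + os!t) mod n"
  by (simp add: pos_def)

theorem corollary4:
  fixes X :: "'a set" and \<B> :: "'a set set" and l :: nat
  assumes "partial_SQS X \<B>"
    and "l \<ge> 1"
    and "real l \<le> 0.164 * root 3 (real (card X))"
  shows "\<exists>\<phi>. sequencing X \<phi> \<and> cyclically_good X \<B> l \<phi>"
proof -
  note S = assms(1)
  define n where "n = card X"
  have finX: "finite X" and n4: "4 \<le> n" and Bs: "\<And>B. B \<in> \<B> \<Longrightarrow> B \<subseteq> X \<and> card B = 4"
    using S by (auto simp: partial_SQS_def n_def)
  show ?thesis
  proof (cases "l \<le> 3")
    case True
    obtain \<phi> where \<phi>: "\<phi> \<in> Omg X" using Omg_ne[OF finX] by blast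
    have "sequencing X \<phi>" using \<phi> by (simp add: Omg_def sequencing_def)
    moreover have "cyclically_good X \<B> l \<phi>"
      unfolding cyclically_good_def independent_def
    proof (intro allI impI ballI notI)
      fix Sx B assume a: "Sx \<subseteq> X" "card Sx = l" "cyc_consec X \<phi> Sx" "B \<in> \<B>" "B \<subseteq> Sx"
      have "card B \<le> card Sx" using a finX by (intro card_mono) (auto intro: finite_subset)
      then show False using a Bs[of B] True by simp
    qed
    ultimately show ?thesis by blast
  next
    case False
    then have l4: "4 \<le> l" by simp
    have nl: "128 * l ^ 3 + 3 \<le> n" "l \<le> n" using numeric[OF _ l4] assms(3) by (auto simp: n_def)
    define F where "F b = (pos n (fst b) (fst (snd b)), snd (snd b))" for b :: "nat \<times> nat list \<times> 'a list"
    define E where "E b = Ev X (fst (F b)) (snd (F b))" for b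
    define I where "I = {0..<n} \<times> (OS l \<times> XS \<B>)"
    define G where "G a = {b \<in> I. \<not> nc (fst (F a)) (snd (F a)) (fst (F b)) (snd (F b))}" for a
    define N3 where "N3 = n * (n - 1) * (n - 2)"
    define M :: real where "M = real (N3 * (n - 3))"
    define p :: real where "p = 1 / M"
    define d where "d = 32 * l ^ 3 * N3"
    have finI: "finite I" using finite_OS finite_XS[OF S] by (simp add: I_def)
    have Fa: "length (fst (F a)) = 4" "length (snd (F a)) = 4" "distinct (snd (F a))"
      "set (snd (F a)) \<in> \<B>" "set (fst (F a)) \<subseteq> {0..<n}" if "a \<in> I" for a
      using that n4 by (auto simp: I_def F_def OS_def XS_def pos_def)
    have D4: "card {ys. length ys = 4 \<and> distinct ys \<and> set ys \<subseteq> X} = N3 * (n - 3)"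
      using card_lists_distinct_length_eq[OF finX, of 4] n4 prod4[of n] by (simp add: n_def N3_def)
    have N3pos: "0 < N3 * (n - 3)" using n4 by (simp add: N3_def)
    have Mpos: "0 < M" using N3pos by (simp add: M_def)
    have neg: "real (card (E a \<inter> (Omg X - \<Union>(E ` T)))) \<le> p * real (card (Omg X - \<Union>(E ` T)))"
      if a: "a \<in> I" and T: "T \<subseteq> I" and TG: "T \<inter> G a = {}" for a T
    proof -
      have ncT: "nc (fst (F a)) (snd (F a)) (fst (F b)) (snd (F b))" if "b \<in> T" for b
        using that T TG by (auto simp: G_def)
      have sX: "set (snd (F a)) \<subseteq> X" using Fa(4)[OF a] Bs by blast
      have "card {ys. length ys = length (fst (F a)) \<and> distinct ys \<and> set ys \<subseteq> X}
           * card (Ev X (fst (F a)) (snd (F a)) \<inter> (Omg X - (\<Union>b\<in>T. Ev X (fst (F b)) (snd (F b)))))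
       \<le> card (Omg X - (\<Union>b\<in>T. Ev X (fst (F b)) (snd (F b))))"
        by (rule neg_bound[OF finX _ Fa(3)[OF a] sX _ ncT]) (use Fa[OF a] in \<open>auto simp: n_def\<close>)
      then have "(N3 * (n - 3)) * card (E a \<inter> (Omg X - \<Union>(E ` T))) \<le> card (Omg X - \<Union>(E ` T))"
        using D4 Fa(1)[OF a] by (simp add: E_def)
      then have "real (N3 * (n - 3)) * real (card (E a \<inter> (Omg X - \<Union>(E ` T)))) \<le> real (card (Omg X - \<Union>(E ` T)))"
        by (metis of_nat_le_iff of_nat_mult)
      then have "M * real (card (E a \<inter> (Omg X - \<Union>(E ` T)))) \<le> real (card (Omg X - \<Union>(E ` T)))"
        by (simp only: M_def)
      then show ?thesis using Mpos by (simp add: p_def field_simps)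
    qed
    have deg: "card (G a \<inter> I) \<le> d" if a: "a \<in> I" for a
    proof -
      define pa where "pa = fst (F a)"
      define xa where "xa = snd (F a)"
      have la: "length pa = 4" "length xa = 4" using Fa[OF a] by (auto simp: pa_def xa_def)
      define P1 where "P1 = (\<Union>t\<in>{0..<4::nat}. \<Union>t'\<in>{0..<4::nat}. {b\<in>I. fst (F b) ! t' = pa ! t})"
      define P2 where "P2 = (\<Union>t\<in>{0..<4::nat}. {b\<in>I. xa ! t \<in> set (snd (F b))})"
      have sub: "G a \<inter> I \<subseteq> P1 \<union> P2"
      proof
        fix b assume b: "b \<in> G a \<inter> I"
        then have bI: "b \<in> I" and nnc: "\<not> nc pa xa (fst (F b)) (snd (F b))"
          by (auto simp: G_def pa_def xa_def)
        have lb: "length (fst (F b)) = 4" "length (snd (F b)) = 4" using Fa[OF bI] by auto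
        obtain t t' where tt: "t < 4" "t' < 4"
          and ne: "(pa!t = fst (F b) ! t') \<noteq> (xa!t = snd (F b) ! t')"
          using nnc la lb by (auto simp: nc_def)
        show "b \<in> P1 \<union> P2"
        proof (cases "pa!t = fst (F b) ! t'")
          case True
          then show ?thesis using bI tt unfolding P1_def by force
        next
          case False
          then have "xa!t = snd (F b) ! t'" using ne by simp
          then have "xa!t \<in> set (snd (F b))" using tt lb by (metis nth_mem)
          then show ?thesis using bI tt unfolding P2_def by force
        qed
      qed
      have c1: "card {b\<in>I. fst (F b) ! t' = u} \<le> card (OS l) * card (XS \<B>)" if t': "t' < 4" for t' u
      proof -
        have inj: "inj_on snd {b\<in>I. fst (F b) ! t' = u}"
        proof (rule inj_onI)
          fix b1 b2 assume bb: "b1 \<in> {b\<in>I. fst (F b) ! t' = u}" "b2 \<in> {b\<in>I. fst (F b) ! t' = u}" "snd b1 = snd b2"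
          obtain w1 o1 x1 where b1: "b1 = (w1, o1, x1)" by (cases b1) auto
          obtain w2 o2 x2 where b2: "b2 = (w2, o2, x2)" by (cases b2) auto
          have o: "o1 = o2" "x1 = x2" using bb(3) b1 b2 by auto
          have w: "w1 < n" "w2 < n" "length o1 = 4" using bb b1 b2 by (auto simp: I_def OS_def)
          have "(w1 + o1 ! t') mod n = (w2 + o1 ! t') mod n"
            using bb b1 b2 o t' w pos_nth[of t' o1 n] by (auto simp: F_def)
          then have "w1 = w2" using modcanc w by blast
          then show "b1 = b2" using b1 b2 o by simp
        qed
        have "snd ` {b\<in>I. fst (F b) ! t' = u} \<subseteq> OS l \<times> XS \<B>" by (auto simp: I_def)
        then have "card {b\<in>I. fst (F b) ! t' = u} \<le> card (OS l \<times> XS \<B>)"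
          by (rule card_inj_on_le[OF inj]) (use finite_OS finite_XS[OF S] in simp)
        then show ?thesis by (simp add: card_cartesian_product)
      qed
      have c2: "card {b\<in>I. x \<in> set (snd (F b))} \<le> n * (card (OS l) * card {xs \<in> XS \<B>. x \<in> set xs})" for x
      proof -
        have "{b\<in>I. x \<in> set (snd (F b))} \<subseteq> {0..<n} \<times> (OS l \<times> {xs \<in> XS \<B>. x \<in> set xs})"
          by (auto simp: I_def F_def)
        then have "card {b\<in>I. x \<in> set (snd (F b))} \<le> card ({0..<n} \<times> (OS l \<times> {xs \<in> XS \<B>. x \<in> set xs}))"
          by (rule card_mono[rotated]) (use finite_OS finite_XS[OF S] in simp)
        then show ?thesis by (simp add: card_cartesian_product)
      qed
      have "card P1 \<le> (\<Sum>t\<in>{0..<4::nat}. card (\<Union>t'\<in>{0..<4::nat}. {b\<in>I. fst (F b) ! t' = pa ! t}))"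
        unfolding P1_def by (rule card_UN_le) simp
      also have "\<dots> \<le> (\<Sum>t\<in>{0..<4::nat}. \<Sum>t'\<in>{0..<4::nat}. card {b\<in>I. fst (F b) ! t' = pa ! t})"
        by (intro sum_mono card_UN_le) simp
      also have "\<dots> \<le> (\<Sum>t\<in>{0..<4::nat}. \<Sum>t'\<in>{0..<4::nat}. card (OS l) * card (XS \<B>))"
        by (intro sum_mono c1) simp
      finally have P1b: "card P1 \<le> 16 * (card (OS l) * card (XS \<B>))" by simp
      have "card P2 \<le> (\<Sum>t\<in>{0..<4::nat}. card {b\<in>I. xa ! t \<in> set (snd (F b))})"
        unfolding P2_def by (rule card_UN_le) simp
      also have "\<dots> \<le> (\<Sum>t\<in>{0..<4::nat}. n * (card (OS l) * (4 * ((card X - 1) * (card X - 2)))))"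
      proof (rule sum_mono)
        fix t :: nat assume "t \<in> {0..<4}"
        have "card {b\<in>I. xa ! t \<in> set (snd (F b))} \<le> n * (card (OS l) * card {xs \<in> XS \<B>. xa ! t \<in> set xs})"
          by (rule c2)
        also have "\<dots> \<le> n * (card (OS l) * (4 * ((card X - 1) * (card X - 2))))"
          using card_XSx[OF S, of "xa ! t"] by (intro mult_le_mono order.refl) auto
        finally show "card {b\<in>I. xa ! t \<in> set (snd (F b))} \<le> n * (card (OS l) * (4 * ((card X - 1) * (card X - 2))))" .
      qed
      finally have P2b: "card P2 \<le> 4 * (n * (card (OS l) * (4 * ((n - 1) * (n - 2)))))" by (simp add: n_def)
      have A: "card (OS l) \<le> l ^ 3" by (rule card_OS)
      have Bc: "card (XS \<B>) \<le> N3" using card_XS[OF S] by (simp add: N3_def n_def)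
      have "card (G a \<inter> I) \<le> card (P1 \<union> P2)"
        by (rule card_mono[OF _ sub]) (simp add: P1_def P2_def finI)
      also have "\<dots> \<le> card P1 + card P2" by (rule card_Un_le)
      also have "\<dots> \<le> 16 * (l ^ 3 * N3) + 4 * (n * (l ^ 3 * (4 * ((n - 1) * (n - 2)))))"
        using P1b P2b A Bc by (intro add_mono order.trans[OF P1b] order.trans[OF P2b] mult_le_mono order.refl) auto
      also have "\<dots> = d"
      proof -
        obtain m1 m2 where m: "m1 = n - 1" "m2 = n - 2" by blast
        have "N3 = n * m1 * m2" using m by (simp add: N3_def)
        then show ?thesis unfolding m[symmetric] by (simp add: d_def algebra_simps)
      qed
      finally show ?thesis .
    qed
    have pd: "4 * p * real d \<le> 1"
    proof -
      have "128 * l ^ 3 \<le> n - 3" using nl by simp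
      then have "128 * l ^ 3 * N3 \<le> (n - 3) * N3" by (rule mult_right_mono) simp
      moreover have "4 * d = 128 * l ^ 3 * N3" by (simp add: d_def)
      ultimately have "4 * d \<le> N3 * (n - 3)" by (simp add: mult.commute)
      then have "real (4 * d) \<le> real (N3 * (n - 3))" by (simp only: of_nat_le_iff)
      then have "4 * real d \<le> M" by (simp add: M_def)
      then show ?thesis using Mpos by (simp add: p_def field_simps)
    qed
    have p14: "p \<le> 1/4"
    proof -
      have "4 * 3 * 2 * 1 \<le> n * (n - 1) * (n - 2) * (n - 3)"
        using n4 by (intro mult_le_mono) auto
      then have "4 \<le> N3 * (n - 3)" by (simp add: N3_def)
      then have M4: "4 \<le> M" unfolding M_def by (metis of_nat_le_iff of_nat_numeral)
      have "1 / M \<le> 1 / 4" by (rule divide_left_mono) (use M4 in auto)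
      then show ?thesis by (simp add: p_def)
    qed
    have "Omg X - \<Union>(E ` I) \<noteq> {}"
      by (rule lll[OF finite_Omg[OF finX] finI Omg_ne[OF finX] deg neg _ pd p14])
         (use Mpos in \<open>auto simp: p_def\<close>)
    then obtain \<phi> where \<phi>: "\<phi> \<in> Omg X" "\<And>b. b \<in> I \<Longrightarrow> \<phi> \<notin> E b" by blast
    have seq: "sequencing X \<phi>" using \<phi> by (simp add: Omg_def sequencing_def)
    have good: "cyclically_good X \<B> l \<phi>"
      unfolding cyclically_good_def independent_def
    proof (intro allI impI ballI notI)
      fix Sx Bk assume a: "Sx \<subseteq> X" "card Sx = l" "cyc_consec X \<phi> Sx" "Bk \<in> \<B>" "Bk \<subseteq> Sx"
      obtain i where i: "i < n" "Sx = (\<lambda>j. \<phi> ((i + j) mod n)) ` {0..<l}"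
        using a(2,3) by (auto simp: cyc_consec_def n_def)
      define g where "g j = \<phi> ((i + j) mod n)" for j
      have bij: "bij_betw \<phi> {0..<n} X" using \<phi>(1) by (simp add: Omg_def n_def)
      have npos: "0 < n" using n4 by simp
      have ginj: "inj_on g {0..<l}"
      proof (rule inj_onI)
        fix j1 j2 assume j: "j1 \<in> {0..<l}" "j2 \<in> {0..<l}" "g j1 = g j2"
        have "(i + j1) mod n = (i + j2) mod n"
          using j(3) bij npos by (auto simp: g_def bij_betw_def inj_on_def)
        then have "(j1 + i) mod n = (j2 + i) mod n" by (simp add: add.commute)
        moreover have "j1 < n" "j2 < n" using j nl(2) by auto
        ultimately show "j1 = j2" by (rule modcanc)
      qed
      define J where "J = {j\<in>{0..<l}. g j \<in> Bk}"
      have JS: "J \<subseteq> {0..<l}" by (auto simp: J_def)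
      have gJ: "g ` J = Bk"
      proof
        show "g ` J \<subseteq> Bk" by (auto simp: J_def)
        show "Bk \<subseteq> g ` J"
        proof
          fix b assume "b \<in> Bk"
          then have "b \<in> Sx" using a(5) by blast
          then obtain j where "j \<in> {0..<l}" "b = g j" using i(2) by (auto simp: g_def)
          then show "b \<in> g ` J" using \<open>b \<in> Bk\<close> by (auto simp: J_def)
        qed
      qed
      have finJ: "finite J" using JS finite_subset by blast
      have cJ: "card J = 4"
        using card_image[OF inj_on_subset[OF ginj JS]] gJ Bs[OF a(4)] by simp
      define js where "js = sorted_list_of_set J"
      have js: "set js = J" "distinct js" "sorted js" "length js = 4"
        using finJ cJ by (auto simp: js_def)
      define j0 where "j0 = js ! 0"
      have j0le: "j0 \<le> js ! t" if "t < 4" for t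
        using js(3,4) that by (auto simp: j0_def sorted_iff_nth_mono)
      have jsl: "js ! t < l" if "t < 4" for t using js that JS nth_mem by (metis atLeastLessThan_iff subsetD)
      define os where "os = map (\<lambda>j. j - j0) js"
      define xs where "xs = map g js"
      define w where "w = (i + j0) mod n"
      have osOS: "os \<in> OS l"
      proof -
        have "set os \<subseteq> {0..<l}"
        proof
          fix q assume "q \<in> set os"
          then obtain t where "t < 4" "q = js ! t - j0" using js(4) by (auto simp: os_def in_set_conv_nth)
          then show "q \<in> {0..<l}" using jsl by fastforce
        qed
        then show ?thesis using js(4) by (simp add: OS_def os_def j0_def)
      qed
      have xsXS: "xs \<in> XS \<B>"
      proof -
        have "distinct xs" unfolding xs_def
          using js(1,2) inj_on_subset[OF ginj JS] by (simp add: distinct_map)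
        moreover have "set xs = Bk" using gJ js(1) by (simp add: xs_def)
        ultimately show ?thesis using a(4) js(4) by (simp add: XS_def xs_def)
      qed
      have mem: "(w, os, xs) \<in> I" using osOS xsXS npos by (simp add: I_def w_def)
      have "\<phi> \<in> E (w, os, xs)"
      proof -
        have "\<phi> (pos n w os ! t) = xs ! t" if t: "t < length (pos n w os)" for t
        proof -
          have t4: "t < 4" using t js(4) by (simp add: pos_def os_def)
          have "pos n w os ! t = ((i + j0) mod n + (js ! t - j0)) mod n"
            using t4 js(4) by (simp add: pos_def os_def w_def)
          also have "\<dots> = (i + j0 + (js ! t - j0)) mod n" by (simp add: mod_add_left_eq)
          also have "i + j0 + (js ! t - j0) = i + js ! t" using j0le[OF t4] by simp
          finally show ?thesis using t4 js(4) by (simp add: xs_def g_def)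
        qed
        then show ?thesis using \<phi>(1) by (simp add: E_def F_def Ev_def)
      qed
      then show False using \<phi>(2)[OF mem] by simp
    qed
    show ?thesis using seq good by blast
  qed
qed

end
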